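(* Let $i\colon H\to G$ be a faithful functor of finite groupoids. Let $E\xrightarrow{k}E'\xrightarrow{\iota_{E'}}H$ and $F\xrightarrow{\ell}F'\xrightarrow{\iota_{F'}}H$ be faithful functors, and put $\iota_E=\iota_{E'}k$, $\iota_F=\iota_{F'}\ell$. Consider the decompositions $E\times_GF\cong E\times_HF\sqcup\partial_i(E,F)$ and $E'\times_GF'\cong E'\times_HF'\sqcup\partial_i(E',F')$. Then the canonical functor $E\times_GF\to E'\times_GF'$, $(x,y,g)\mapsto(k(x),\ell(y),g)$, respects these decompositions: it maps (the image of) $E\times_HF$ into (the image of) $E'\times_HF'$, where it agrees with the functor $(x,y,h)\mapsto(k(x),\ell(y),h)$, and it maps $\partial_i(E,F)$ into $\partial_i(E',F')$. Hence it defines a unique functor $\partial_i(k,\ell)\colon\partial_i(E,F)\to\partial_i(E',F')$, and this functor is faithful.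
   Context: A finite groupoid is a finite category all of whose morphisms are invertible. For functors $a\colon X\to Z$, $b\colon Y\to Z$ of finite groupoids, the isocomma $X\times_ZY$ has objects the triples $(x,y,g)$ with $x\in X$, $y\in Y$, $g\colon a(x)\to b(y)$ an isomorphism in $Z$, and morphisms $(x,y,g)\to(x',y',g')$ the pairs $(h,k)$, $h\colon x\to x'$, $k\colon y\to y'$, with $g'a(h)=b(k)g$. Here $E\times_HF$ is the isocomma of $\iota_E,\iota_F$ and $E\times_GF$ that of $i\iota_E,i\iota_F$ (similarly for $E',F'$). The functor $E\times_HF\to E\times_GF$, $(x,y,h)\mapsto(x,y,i(h))$, identity on morphisms, is fully faithful with image a union of connected components; $\partial_i(E,F)$ is the full subgroupoid of $E\times_GF$ consisting of the connected components not meeting this image, so that $E\times_GF\cong E\times_HF\sqcup\partial_i(E,F)$. *)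

theory Defs
  imports Main
begin

record ('o,'m) cat =
  Obj :: "'o set"
  Mor :: "'m set"
  Dom :: "'m \<Rightarrow> 'o"
  Cod :: "'m \<Rightarrow> 'o"
  Comp :: "'m \<Rightarrow> 'm \<Rightarrow> 'm"   (* Comp C g f = g \<circ> f, defined when Cod f = Dom g *)
  Idm :: "'o \<Rightarrow> 'm"

definition is_category :: "('o,'m) cat \<Rightarrow> bool" where
  "is_category C \<longleftrightarrow>
     (\<forall>f\<in>Mor C. Dom C f \<in> Obj C \<and> Cod C f \<in> Obj C) \<and>
     (\<forall>f\<in>Mor C. \<forall>g\<in>Mor C. Cod C f = Dom C g \<longrightarrow>
        Comp C g f \<in> Mor C \<and> Dom C (Comp C g f) = Dom C f \<and> Cod C (Comp C g f) = Cod C g) \<and>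
     (\<forall>x\<in>Obj C. Idm C x \<in> Mor C \<and> Dom C (Idm C x) = x \<and> Cod C (Idm C x) = x) \<and>
     (\<forall>f\<in>Mor C. Comp C f (Idm C (Dom C f)) = f \<and> Comp C (Idm C (Cod C f)) f = f) \<and>
     (\<forall>f\<in>Mor C. \<forall>g\<in>Mor C. \<forall>h\<in>Mor C. Cod C f = Dom C g \<longrightarrow> Cod C g = Dom C h \<longrightarrow>
        Comp C h (Comp C g f) = Comp C (Comp C h g) f)"

definition is_groupoid :: "('o,'m) cat \<Rightarrow> bool" where
  "is_groupoid C \<longleftrightarrow> is_category C \<and>
     (\<forall>f\<in>Mor C. \<exists>g\<in>Mor C. Dom C g = Cod C f \<and> Cod C g = Dom C f \<and>
        Comp C g f = Idm C (Dom C f) \<and> Comp C f g = Idm C (Cod C f))"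

definition finite_groupoid :: "('o,'m) cat \<Rightarrow> bool" where
  "finite_groupoid C \<longleftrightarrow> is_groupoid C \<and> finite (Obj C) \<and> finite (Mor C)"

definition is_functor :: "('o1,'m1) cat \<Rightarrow> ('o2,'m2) cat \<Rightarrow> ('o1 \<Rightarrow> 'o2) \<Rightarrow> ('m1 \<Rightarrow> 'm2) \<Rightarrow> bool" where
  "is_functor C D Fo Fm \<longleftrightarrow>
     (\<forall>x\<in>Obj C. Fo x \<in> Obj D) \<and>
     (\<forall>f\<in>Mor C. Fm f \<in> Mor D \<and> Dom D (Fm f) = Fo (Dom C f) \<and> Cod D (Fm f) = Fo (Cod C f)) \<and>
     (\<forall>f\<in>Mor C. \<forall>g\<in>Mor C. Cod C f = Dom C g \<longrightarrow> Fm (Comp C g f) = Comp D (Fm g) (Fm f)) \<and>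
     (\<forall>x\<in>Obj C. Fm (Idm C x) = Idm D (Fo x))"

definition faithful :: "('o1,'m1) cat \<Rightarrow> ('o2,'m2) cat \<Rightarrow> ('o1 \<Rightarrow> 'o2) \<Rightarrow> ('m1 \<Rightarrow> 'm2) \<Rightarrow> bool" where
  "faithful C D Fo Fm \<longleftrightarrow> is_functor C D Fo Fm \<and>
     (\<forall>f\<in>Mor C. \<forall>g\<in>Mor C. Dom C f = Dom C g \<longrightarrow> Cod C f = Cod C g \<longrightarrow> Fm f = Fm g \<longrightarrow> f = g)"

text \<open>Objects (x,y,g) with g : a x \<rightarrow> b y in Z; a morphism (x,y,g) \<rightarrow> (x',y',g') is recorded
  as (source, target, h, k) with g' \<circ> a(h) = b(k) \<circ> g.  (In a groupoid Z every g is an iso.)\<close>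

definition isocomma ::
  "('ox,'mx) cat \<Rightarrow> ('oy,'my) cat \<Rightarrow> ('oz,'mz) cat \<Rightarrow>
   ('ox \<Rightarrow> 'oz) \<Rightarrow> ('mx \<Rightarrow> 'mz) \<Rightarrow> ('oy \<Rightarrow> 'oz) \<Rightarrow> ('my \<Rightarrow> 'mz) \<Rightarrow>
   ('ox \<times> 'oy \<times> 'mz, ('ox \<times> 'oy \<times> 'mz) \<times> ('ox \<times> 'oy \<times> 'mz) \<times> 'mx \<times> 'my) cat" where
  "isocomma X Y Z ao am bo bm =
    (let Ob = {(x,y,g). x \<in> Obj X \<and> y \<in> Obj Y \<and> g \<in> Mor Z \<and> Dom Z g = ao x \<and> Cod Z g = bo y} in
     \<lparr> Obj = Ob,
       Mor = {(s,t,h,k). s \<in> Ob \<and> t \<in> Ob \<and>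
                h \<in> Mor X \<and> Dom X h = fst s \<and> Cod X h = fst t \<and>
                k \<in> Mor Y \<and> Dom Y k = fst (snd s) \<and> Cod Y k = fst (snd t) \<and>
                Comp Z (snd (snd t)) (am h) = Comp Z (bm k) (snd (snd s))},
       Dom = (\<lambda>(s,t,h,k). s),
       Cod = (\<lambda>(s,t,h,k). t),
       Comp = (\<lambda>(t',u,h',k') (s,t,h,k). (s, u, Comp X h' h, Comp Y k' k)),
       Idm = (\<lambda>(x,y,g). ((x,y,g), (x,y,g), Idm X x, Idm Y y)) \<rparr>)"

fun incl_o :: "('mh \<Rightarrow> 'mg) \<Rightarrow> 'a \<times> 'b \<times> 'mh \<Rightarrow> 'a \<times> 'b \<times> 'mg" where
  "incl_o im (x,y,h) = (x, y, im h)"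

fun incl_m :: "('mh \<Rightarrow> 'mg) \<Rightarrow> ('a \<times> 'b \<times> 'mh) \<times> ('a \<times> 'b \<times> 'mh) \<times> 'c \<times> 'd
               \<Rightarrow> ('a \<times> 'b \<times> 'mg) \<times> ('a \<times> 'b \<times> 'mg) \<times> 'c \<times> 'd" where
  "incl_m im (s,t,h,k) = (incl_o im s, incl_o im t, h, k)"

fun cmap_o :: "('a \<Rightarrow> 'a2) \<Rightarrow> ('b \<Rightarrow> 'b2) \<Rightarrow> 'a \<times> 'b \<times> 'm \<Rightarrow> 'a2 \<times> 'b2 \<times> 'm" where
  "cmap_o ko lo (x,y,g) = (ko x, lo y, g)"

fun cmap_m :: "('a \<Rightarrow> 'a2) \<Rightarrow> ('c \<Rightarrow> 'c2) \<Rightarrow> ('b \<Rightarrow> 'b2) \<Rightarrow> ('d \<Rightarrow> 'd2) \<Rightarrow>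
               ('a \<times> 'b \<times> 'm) \<times> ('a \<times> 'b \<times> 'm) \<times> 'c \<times> 'd \<Rightarrow>
               ('a2 \<times> 'b2 \<times> 'm) \<times> ('a2 \<times> 'b2 \<times> 'm) \<times> 'c2 \<times> 'd2" where
  "cmap_m ko km lo lm (s,t,h,k) = (cmap_o ko lo s, cmap_o ko lo t, km h, lm k)"

definition connected :: "('o,'m) cat \<Rightarrow> 'o \<Rightarrow> 'o \<Rightarrow> bool" where
  "connected C x y \<longleftrightarrow>
     (\<lambda>a b. \<exists>f\<in>Mor C. (Dom C f = a \<and> Cod C f = b) \<or> (Dom C f = b \<and> Cod C f = a))\<^sup>*\<^sup>* x y"

definition full_sub :: "('o,'m) cat \<Rightarrow> 'o set \<Rightarrow> ('o,'m) cat" where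
  "full_sub C S = C\<lparr> Obj := S, Mor := {f \<in> Mor C. Dom C f \<in> S \<and> Cod C f \<in> S} \<rparr>"

text \<open>Here (eo,em) = \<iota>_E : E \<rightarrow> H, (fo,fm) = \<iota>_F : F \<rightarrow> H, (io,im) = i : H \<rightarrow> G.\<close>

definition boundary ::
  "('oe,'me) cat \<Rightarrow> ('of,'mf) cat \<Rightarrow> ('oh,'mh) cat \<Rightarrow> ('og,'mg) cat \<Rightarrow>
   ('oh \<Rightarrow> 'og) \<Rightarrow> ('mh \<Rightarrow> 'mg) \<Rightarrow> ('oe \<Rightarrow> 'oh) \<Rightarrow> ('me \<Rightarrow> 'mh) \<Rightarrow> ('of \<Rightarrow> 'oh) \<Rightarrow> ('mf \<Rightarrow> 'mh) \<Rightarrow>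
   ('oe \<times> 'of \<times> 'mg, ('oe \<times> 'of \<times> 'mg) \<times> ('oe \<times> 'of \<times> 'mg) \<times> 'me \<times> 'mf) cat" where
  "boundary E F H G io im eo em fo fm =
    (let P = isocomma E F G (io \<circ> eo) (im \<circ> em) (io \<circ> fo) (im \<circ> fm);
         Q = isocomma E F H eo em fo fm
     in full_sub P {c \<in> Obj P. \<not> (\<exists>q \<in> Obj Q. connected P c (incl_o im q))})"

end

theory Submission
  imports Defs
begin

lemma cat_comp: "is_category C \<Longrightarrow> f \<in> Mor C \<Longrightarrow> g \<in> Mor C \<Longrightarrow> Cod C f = Dom C g \<Longrightarrow>
  Comp C g f \<in> Mor C \<and> Dom C (Comp C g f) = Dom C f \<and> Cod C (Comp C g f) = Cod C g"
  unfolding is_category_def by blast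
lemma cat_dom: "is_category C \<Longrightarrow> f \<in> Mor C \<Longrightarrow> Dom C f \<in> Obj C \<and> Cod C f \<in> Obj C"
  unfolding is_category_def by blast
lemma cat_id: "is_category C \<Longrightarrow> x \<in> Obj C \<Longrightarrow> Idm C x \<in> Mor C \<and> Dom C (Idm C x) = x \<and> Cod C (Idm C x) = x"
  unfolding is_category_def by blast
lemma cat_unit: "is_category C \<Longrightarrow> f \<in> Mor C \<Longrightarrow> Comp C f (Idm C (Dom C f)) = f \<and> Comp C (Idm C (Cod C f)) f = f"
  unfolding is_category_def by blast
lemma cat_assoc: "is_category C \<Longrightarrow> f \<in> Mor C \<Longrightarrow> g \<in> Mor C \<Longrightarrow> h \<in> Mor C \<Longrightarrow> Cod C f = Dom C g \<Longrightarrow> Cod C g = Dom C h \<Longrightarrow>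
        Comp C h (Comp C g f) = Comp C (Comp C h g) f"
  unfolding is_category_def by blast
lemma gpd_inv: "is_groupoid C \<Longrightarrow> f \<in> Mor C \<Longrightarrow> \<exists>g\<in>Mor C. Dom C g = Cod C f \<and> Cod C g = Dom C f \<and>
        Comp C g f = Idm C (Dom C f) \<and> Comp C f g = Idm C (Cod C f)"
  unfolding is_groupoid_def by blast
lemma fun_obj: "is_functor C D Fo Fm \<Longrightarrow> x \<in> Obj C \<Longrightarrow> Fo x \<in> Obj D"
  unfolding is_functor_def by blast
lemma fun_mor: "is_functor C D Fo Fm \<Longrightarrow> f \<in> Mor C \<Longrightarrow> Fm f \<in> Mor D \<and> Dom D (Fm f) = Fo (Dom C f) \<and> Cod D (Fm f) = Fo (Cod C f)"
  unfolding is_functor_def by blast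
lemma fun_comp: "is_functor C D Fo Fm \<Longrightarrow> f \<in> Mor C \<Longrightarrow> g \<in> Mor C \<Longrightarrow> Cod C f = Dom C g \<Longrightarrow> Fm (Comp C g f) = Comp D (Fm g) (Fm f)"
  unfolding is_functor_def by blast
lemma fun_id: "is_functor C D Fo Fm \<Longrightarrow> x \<in> Obj C \<Longrightarrow> Fm (Idm C x) = Idm D (Fo x)"
  unfolding is_functor_def by blast

lemma iso_Obj: "Obj (isocomma X Y Z ao am bo bm) = {(x,y,g). x \<in> Obj X \<and> y \<in> Obj Y \<and> g \<in> Mor Z \<and> Dom Z g = ao x \<and> Cod Z g = bo y}"
  by (simp add: isocomma_def Let_def)
lemma iso_Mor: "Mor (isocomma X Y Z ao am bo bm) = {(s,t,h,k). s \<in> Obj (isocomma X Y Z ao am bo bm) \<and> t \<in> Obj (isocomma X Y Z ao am bo bm) \<and>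
                h \<in> Mor X \<and> Dom X h = fst s \<and> Cod X h = fst t \<and>
                k \<in> Mor Y \<and> Dom Y k = fst (snd s) \<and> Cod Y k = fst (snd t) \<and>
                Comp Z (snd (snd t)) (am h) = Comp Z (bm k) (snd (snd s))}"
  by (simp add: isocomma_def Let_def)
lemma iso_simps:
  "Dom (isocomma X Y Z ao am bo bm) = (\<lambda>(s,t,h,k). s)"
  "Cod (isocomma X Y Z ao am bo bm) = (\<lambda>(s,t,h,k). t)"
  "Comp (isocomma X Y Z ao am bo bm) = (\<lambda>(t',u,h',k') (s,t,h,k). (s, u, Comp X h' h, Comp Y k' k))"
  "Idm (isocomma X Y Z ao am bo bm) = (\<lambda>(x,y,g). ((x,y,g), (x,y,g), Idm X x, Idm Y y))"
  by (simp_all add: isocomma_def Let_def)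

lemma fs_simps:
  "Obj (full_sub C S) = S" "Mor (full_sub C S) = {f \<in> Mor C. Dom C f \<in> S \<and> Cod C f \<in> S}"
  "Dom (full_sub C S) = Dom C" "Cod (full_sub C S) = Cod C" "Comp (full_sub C S) = Comp C" "Idm (full_sub C S) = Idm C"
  by (simp_all add: full_sub_def)

definition Pr :: "('oh,'mh) cat \<Rightarrow> ('a \<Rightarrow> 'oh) \<Rightarrow> ('b \<Rightarrow> 'oh) \<Rightarrow> ('mh \<Rightarrow> 'mg) \<Rightarrow> 'a \<times> 'b \<times> 'mg \<Rightarrow> bool" where
  "Pr H eo fo im c = (case c of (x,y,g) \<Rightarrow> \<exists>h\<in>Mor H. Dom H h = eo x \<and> Cod H h = fo y \<and> g = im h)"

lemma step_fwd:
  assumes H: "is_groupoid H" and G: "is_category G" and fi: "is_functor H G io im"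
    and u: "u \<in> Mor H" and v: "v \<in> Mor H" and h1: "h1 \<in> Mor H"
    and d1: "Dom H h1 = Dom H u" and d2: "Cod H h1 = Dom H v"
    and g2: "g2 \<in> Mor G" and dg2: "Dom G g2 = io (Cod H u)"
    and eq: "Comp G g2 (im u) = Comp G (im v) (im h1)"
  shows "\<exists>h\<in>Mor H. Dom H h = Cod H u \<and> Cod H h = Cod H v \<and> g2 = im h"
proof -
  have Hc: "is_category H" using H by (simp add: is_groupoid_def)
  obtain u' where u': "u' \<in> Mor H" "Dom H u' = Cod H u" "Cod H u' = Dom H u"
     "Comp H u u' = Idm H (Cod H u)" using gpd_inv[OF H u] by blast
  have cu: "Cod H u \<in> Obj H" using cat_dom[OF Hc u] by blast
  have vh: "Comp H v h1 \<in> Mor H" "Dom H (Comp H v h1) = Dom H u" "Cod H (Comp H v h1) = Cod H v"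
    using cat_comp[OF Hc h1 v] d1 d2 by auto
  define h where "h = Comp H (Comp H v h1) u'"
  have hh: "h \<in> Mor H" "Dom H h = Cod H u" "Cod H h = Cod H v"
    using cat_comp[OF Hc u'(1) vh(1)] vh u' by (auto simp: h_def)
  have imu: "im u \<in> Mor G" "Dom G (im u) = io (Dom H u)" "Cod G (im u) = io (Cod H u)" using fun_mor[OF fi u] by auto
  have imu': "im u' \<in> Mor G" "Dom G (im u') = io (Cod H u)" "Cod G (im u') = io (Dom H u)" using fun_mor[OF fi u'(1)] u' by auto
  have "g2 = Comp G g2 (Idm G (Dom G g2))" using cat_unit[OF G g2] by simp
  also have "Idm G (Dom G g2) = im (Idm H (Cod H u))" using fun_id[OF fi cu] dg2 by simp
  also have "\<dots> = Comp G (im u) (im u')" using u' fun_comp[OF fi u'(1) u] by simp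
  also have "Comp G g2 (Comp G (im u) (im u')) = Comp G (Comp G g2 (im u)) (im u')"
    using cat_assoc[OF G imu'(1) imu(1) g2] imu imu' dg2 by simp
  also have "\<dots> = Comp G (Comp G (im v) (im h1)) (im u')" using eq by simp
  also have "\<dots> = im h" unfolding h_def
    using fun_comp[OF fi h1 v] d2 fun_comp[OF fi u'(1) vh(1)] vh u' by simp
  finally show ?thesis using hh by blast
qed

lemma step_bwd:
  assumes H: "is_groupoid H" and G: "is_category G" and fi: "is_functor H G io im"
    and u: "u \<in> Mor H" and v: "v \<in> Mor H" and h2: "h2 \<in> Mor H"
    and d1: "Dom H h2 = Cod H u" and d2: "Cod H h2 = Cod H v"
    and g1: "g1 \<in> Mor G" and dg1: "Cod G g1 = io (Dom H v)"
    and eq: "Comp G (im h2) (im u) = Comp G (im v) g1"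
  shows "\<exists>h\<in>Mor H. Dom H h = Dom H u \<and> Cod H h = Dom H v \<and> g1 = im h"
proof -
  have Hc: "is_category H" using H by (simp add: is_groupoid_def)
  obtain v' where v': "v' \<in> Mor H" "Dom H v' = Cod H v" "Cod H v' = Dom H v"
     "Comp H v' v = Idm H (Dom H v)" using gpd_inv[OF H v] by blast
  have dv: "Dom H v \<in> Obj H" using cat_dom[OF Hc v] by blast
  have hu: "Comp H h2 u \<in> Mor H" "Dom H (Comp H h2 u) = Dom H u" "Cod H (Comp H h2 u) = Cod H v"
    using cat_comp[OF Hc u h2] d1 d2 by auto
  define h where "h = Comp H v' (Comp H h2 u)"
  have hh: "h \<in> Mor H" "Dom H h = Dom H u" "Cod H h = Dom H v"
    using cat_comp[OF Hc hu(1) v'(1)] hu v' by (auto simp: h_def)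
  have imv: "im v \<in> Mor G" "Dom G (im v) = io (Dom H v)" "Cod G (im v) = io (Cod H v)" using fun_mor[OF fi v] by auto
  have imv': "im v' \<in> Mor G" "Dom G (im v') = io (Cod H v)" "Cod G (im v') = io (Dom H v)" using fun_mor[OF fi v'(1)] v' by auto
  have "g1 = Comp G (Idm G (Cod G g1)) g1" using cat_unit[OF G g1] by simp
  also have "Idm G (Cod G g1) = im (Idm H (Dom H v))" using fun_id[OF fi dv] dg1 by simp
  also have "\<dots> = Comp G (im v') (im v)" using v' fun_comp[OF fi v v'(1)] by simp
  also have "Comp G (Comp G (im v') (im v)) g1 = Comp G (im v') (Comp G (im v) g1)"
    using cat_assoc[OF G g1 imv(1) imv'(1)] imv imv' dg1 by simp
  also have "\<dots> = Comp G (im v') (Comp G (im h2) (im u))" using eq by simp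
  also have "\<dots> = im h" unfolding h_def
    using fun_comp[OF fi u h2] d1 fun_comp[OF fi hu(1) v'(1)] hu v' by simp
  finally show ?thesis using hh by blast
qed

lemma edge_Pr:
  assumes H: "is_groupoid H" and G: "is_category G" and fi: "is_functor H G io im"
    and fe: "is_functor E' H eo em" and ff: "is_functor F' H fo fm"
    and f: "f \<in> Mor (isocomma E' F' G (io\<circ>eo) (im\<circ>em) (io\<circ>fo) (im\<circ>fm))"
  shows "Pr H eo fo im (Dom (isocomma E' F' G (io\<circ>eo) (im\<circ>em) (io\<circ>fo) (im\<circ>fm)) f)
     \<longleftrightarrow> Pr H eo fo im (Cod (isocomma E' F' G (io\<circ>eo) (im\<circ>em) (io\<circ>fo) (im\<circ>fm)) f)"
proof -
  obtain x1 y1 g1 x2 y2 g2 a b where fd: "f = ((x1,y1,g1),(x2,y2,g2),a,b)" by (cases f) auto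
  from f have A: "g1 \<in> Mor G" "Cod G g1 = io (fo y1)" "g2 \<in> Mor G" "Dom G g2 = io (eo x2)"
    "a \<in> Mor E'" "Dom E' a = x1" "Cod E' a = x2" "b \<in> Mor F'" "Dom F' b = y1" "Cod F' b = y2"
    "Comp G g2 (im (em a)) = Comp G (im (fm b)) g1"
    by (auto simp: fd iso_Mor iso_Obj)
  have u: "em a \<in> Mor H" "Dom H (em a) = eo x1" "Cod H (em a) = eo x2" using fun_mor[OF fe A(5)] A by auto
  have v: "fm b \<in> Mor H" "Dom H (fm b) = fo y1" "Cod H (fm b) = fo y2" using fun_mor[OF ff A(8)] A by auto
  show ?thesis
  proof
    assume "Pr H eo fo im (Dom (isocomma E' F' G (io\<circ>eo) (im\<circ>em) (io\<circ>fo) (im\<circ>fm)) f)"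
    then obtain h1 where h1: "h1 \<in> Mor H" "Dom H h1 = eo x1" "Cod H h1 = fo y1" "g1 = im h1"
      by (auto simp: fd iso_simps Pr_def)
    show "Pr H eo fo im (Cod (isocomma E' F' G (io\<circ>eo) (im\<circ>em) (io\<circ>fo) (im\<circ>fm)) f)"
      using step_fwd[OF H G fi u(1) v(1) h1(1)] h1 u v A by (auto simp: fd iso_simps Pr_def)
  next
    assume "Pr H eo fo im (Cod (isocomma E' F' G (io\<circ>eo) (im\<circ>em) (io\<circ>fo) (im\<circ>fm)) f)"
    then obtain h2 where h2: "h2 \<in> Mor H" "Dom H h2 = eo x2" "Cod H h2 = fo y2" "g2 = im h2"
      by (auto simp: fd iso_simps Pr_def)
    show "Pr H eo fo im (Dom (isocomma E' F' G (io\<circ>eo) (im\<circ>em) (io\<circ>fo) (im\<circ>fm)) f)"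
      using step_bwd[OF H G fi u(1) v(1) h2(1)] h2 u v A by (auto simp: fd iso_simps Pr_def)
  qed
qed

lemma conn_Pr:
  assumes H: "is_groupoid H" and G: "is_category G" and fi: "is_functor H G io im"
    and fe: "is_functor E' H eo em" and ff: "is_functor F' H fo fm"
    and c: "connected (isocomma E' F' G (io\<circ>eo) (im\<circ>em) (io\<circ>fo) (im\<circ>fm)) x y"
  shows "Pr H eo fo im x \<longleftrightarrow> Pr H eo fo im y"
  using c unfolding connected_def
proof (induction rule: rtranclp_induct)
  case base then show ?case by simp
next
  case (step y z)
  then show ?case using edge_Pr[OF H G fi fe ff] by blast
qed

lemma cmap_functor:
  assumes fk: "is_functor E E' ko km" and fl: "is_functor F F' lo lm"
  shows "is_functor (isocomma E F Z (ao \<circ> ko) (am \<circ> km) (bo \<circ> lo) (bm \<circ> lm)) (isocomma E' F' Z ao am bo bm)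
     (cmap_o ko lo) (cmap_m ko km lo lm)"
  unfolding is_functor_def
proof (intro conjI ballI impI)
  fix c assume "c \<in> Obj (isocomma E F Z (ao \<circ> ko) (am \<circ> km) (bo \<circ> lo) (bm \<circ> lm))"
  then show "cmap_o ko lo c \<in> Obj (isocomma E' F' Z ao am bo bm)"
    by (auto simp: iso_Obj fun_obj[OF fk] fun_obj[OF fl])
next
  fix f assume f: "f \<in> Mor (isocomma E F Z (ao \<circ> ko) (am \<circ> km) (bo \<circ> lo) (bm \<circ> lm))"
  obtain x1 y1 g1 x2 y2 g2 a b where fd: "f = ((x1,y1,g1),(x2,y2,g2),a,b)" by (cases f) auto
  from f have A: "a \<in> Mor E" "b \<in> Mor F" "x1 \<in> Obj E" "x2 \<in> Obj E" "y1 \<in> Obj F" "y2 \<in> Obj F"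
     by (auto simp: fd iso_Mor iso_Obj)
  show "cmap_m ko km lo lm f \<in> Mor (isocomma E' F' Z ao am bo bm)"
    using f fun_mor[OF fk A(1)] fun_mor[OF fl A(2)] fun_obj[OF fk A(3)] fun_obj[OF fk A(4)]
      fun_obj[OF fl A(5)] fun_obj[OF fl A(6)]
    by (auto simp: fd iso_Mor iso_Obj)
  show "Dom (isocomma E' F' Z ao am bo bm) (cmap_m ko km lo lm f) =
        cmap_o ko lo (Dom (isocomma E F Z (ao \<circ> ko) (am \<circ> km) (bo \<circ> lo) (bm \<circ> lm)) f)"
    by (simp add: fd iso_simps)
  show "Cod (isocomma E' F' Z ao am bo bm) (cmap_m ko km lo lm f) =
        cmap_o ko lo (Cod (isocomma E F Z (ao \<circ> ko) (am \<circ> km) (bo \<circ> lo) (bm \<circ> lm)) f)"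
    by (simp add: fd iso_simps)
next
  fix f g assume f: "f \<in> Mor (isocomma E F Z (ao \<circ> ko) (am \<circ> km) (bo \<circ> lo) (bm \<circ> lm))"
    and g: "g \<in> Mor (isocomma E F Z (ao \<circ> ko) (am \<circ> km) (bo \<circ> lo) (bm \<circ> lm))"
    and fg: "Cod (isocomma E F Z (ao \<circ> ko) (am \<circ> km) (bo \<circ> lo) (bm \<circ> lm)) f =
       Dom (isocomma E F Z (ao \<circ> ko) (am \<circ> km) (bo \<circ> lo) (bm \<circ> lm)) g"
  obtain s t a b where fd: "f = (s,t,a,b)" by (cases f) auto
  obtain s' t' a' b' where gd: "g = (s',t',a',b')" by (cases g) auto
  from f g fg have A: "a \<in> Mor E" "b \<in> Mor F" "a' \<in> Mor E" "b' \<in> Mor F" "Cod E a = Dom E a'" "Cod F b = Dom F b'"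
    by (auto simp: fd gd iso_Mor iso_simps)
  show "cmap_m ko km lo lm (Comp (isocomma E F Z (ao \<circ> ko) (am \<circ> km) (bo \<circ> lo) (bm \<circ> lm)) g f) =
       Comp (isocomma E' F' Z ao am bo bm) (cmap_m ko km lo lm g) (cmap_m ko km lo lm f)"
    using fun_comp[OF fk A(1) A(3) A(5)] fun_comp[OF fl A(2) A(4) A(6)]
    by (simp add: fd gd iso_simps)
next
  fix c assume "c \<in> Obj (isocomma E F Z (ao \<circ> ko) (am \<circ> km) (bo \<circ> lo) (bm \<circ> lm))"
  then show "cmap_m ko km lo lm (Idm (isocomma E F Z (ao \<circ> ko) (am \<circ> km) (bo \<circ> lo) (bm \<circ> lm)) c) =
         Idm (isocomma E' F' Z ao am bo bm) (cmap_o ko lo c)"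
    by (auto simp: iso_Obj iso_simps fun_id[OF fk] fun_id[OF fl])
qed

theorem proposition4p10:
  fixes H :: "('oh,'mh) cat" and G :: "('og,'mg) cat"
    and E :: "('oe,'me) cat" and E' :: "('oe2,'me2) cat"
    and F :: "('of,'mf) cat" and F' :: "('of2,'mf2) cat"
    and io :: "'oh \<Rightarrow> 'og" and im :: "'mh \<Rightarrow> 'mg"
    and ko :: "'oe \<Rightarrow> 'oe2" and km :: "'me \<Rightarrow> 'me2"
    and eo :: "'oe2 \<Rightarrow> 'oh" and em :: "'me2 \<Rightarrow> 'mh"
    and lo :: "'of \<Rightarrow> 'of2" and lm :: "'mf \<Rightarrow> 'mf2"
    and fo :: "'of2 \<Rightarrow> 'oh" and fm :: "'mf2 \<Rightarrow> 'mh"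
  assumes fgH: "finite_groupoid H" and fgG: "finite_groupoid G"
    and fgE: "finite_groupoid E" and fgE': "finite_groupoid E'"
    and fgF: "finite_groupoid F" and fgF': "finite_groupoid F'"
    and i_faithful: "faithful H G io im"
    and k_faithful: "faithful E E' ko km"
    and iotaE'_faithful: "faithful E' H eo em"
    and l_faithful: "faithful F F' lo lm"
    and iotaF'_faithful: "faithful F' H fo fm"
  defines "EGF \<equiv> isocomma E F G (io \<circ> (eo \<circ> ko)) (im \<circ> (em \<circ> km)) (io \<circ> (fo \<circ> lo)) (im \<circ> (fm \<circ> lm))"
    and "EHF \<equiv> isocomma E F H (eo \<circ> ko) (em \<circ> km) (fo \<circ> lo) (fm \<circ> lm)"
    and "E'GF' \<equiv> isocomma E' F' G (io \<circ> eo) (im \<circ> em) (io \<circ> fo) (im \<circ> fm)"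
    and "E'HF' \<equiv> isocomma E' F' H eo em fo fm"
    and "dEF \<equiv> boundary E F H G io im (eo \<circ> ko) (em \<circ> km) (fo \<circ> lo) (fm \<circ> lm)"
    and "dE'F' \<equiv> boundary E' F' H G io im eo em fo fm"
  shows
    "is_functor EGF E'GF' (cmap_o ko lo) (cmap_m ko km lo lm)
     \<and> (\<forall>q \<in> Obj EHF. cmap_o ko lo q \<in> Obj E'HF'
          \<and> cmap_o ko lo (incl_o im q) = incl_o im (cmap_o ko lo q))
     \<and> (\<forall>f \<in> Mor EHF. cmap_m ko km lo lm f \<in> Mor E'HF'
          \<and> cmap_m ko km lo lm (incl_m im f) = incl_m im (cmap_m ko km lo lm f))
     \<and> (\<forall>c \<in> Obj dEF. cmap_o ko lo c \<in> Obj dE'F')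
     \<and> (\<forall>f \<in> Mor dEF. cmap_m ko km lo lm f \<in> Mor dE'F')
     \<and> faithful dEF dE'F' (cmap_o ko lo) (cmap_m ko km lo lm)"
proof -
  have Hg: "is_groupoid H" using fgH by (simp add: finite_groupoid_def)
  have Gc: "is_category G" using fgG by (simp add: finite_groupoid_def is_groupoid_def)
  have fi: "is_functor H G io im" using i_faithful by (simp add: faithful_def)
  have fk: "is_functor E E' ko km" using k_faithful by (simp add: faithful_def)
  have fl: "is_functor F F' lo lm" using l_faithful by (simp add: faithful_def)
  have fe: "is_functor E' H eo em" using iotaE'_faithful by (simp add: faithful_def)
  have ff: "is_functor F' H fo fm" using iotaF'_faithful by (simp add: faithful_def)
  have EGF_eq: "EGF = isocomma E F G ((io \<circ> eo) \<circ> ko) ((im \<circ> em) \<circ> km) ((io \<circ> fo) \<circ> lo) ((im \<circ> fm) \<circ> lm)"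
    by (simp add: EGF_def o_assoc)
  have func: "is_functor EGF E'GF' (cmap_o ko lo) (cmap_m ko km lo lm)"
    unfolding EGF_eq E'GF'_def by (rule cmap_functor[OF fk fl])
  have funcH: "is_functor EHF E'HF' (cmap_o ko lo) (cmap_m ko km lo lm)"
    unfolding EHF_def E'HF'_def by (rule cmap_functor[OF fk fl])
  define S where "S = {c \<in> Obj EGF. \<not> (\<exists>q \<in> Obj EHF. connected EGF c (incl_o im q))}"
  define S' where "S' = {c \<in> Obj E'GF'. \<not> (\<exists>q \<in> Obj E'HF'. connected E'GF' c (incl_o im q))}"
  have dEF_eq: "dEF = full_sub EGF S"
    by (simp add: dEF_def boundary_def Let_def S_def EGF_def EHF_def)
  have dE'F'_eq: "dE'F' = full_sub E'GF' S'"
    by (simp add: dE'F'_def boundary_def Let_def S'_def E'GF'_def E'HF'_def)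
  have P2: "\<forall>q \<in> Obj EHF. cmap_o ko lo q \<in> Obj E'HF'
          \<and> cmap_o ko lo (incl_o im q) = incl_o im (cmap_o ko lo q)"
  proof
    fix q assume "q \<in> Obj EHF"
    then show "cmap_o ko lo q \<in> Obj E'HF' \<and> cmap_o ko lo (incl_o im q) = incl_o im (cmap_o ko lo q)"
      using fun_obj[OF funcH] by (cases q) auto
  qed
  have P3: "\<forall>f \<in> Mor EHF. cmap_m ko km lo lm f \<in> Mor E'HF'
          \<and> cmap_m ko km lo lm (incl_m im f) = incl_m im (cmap_m ko km lo lm f)"
  proof
    fix f assume "f \<in> Mor EHF"
    then show "cmap_m ko km lo lm f \<in> Mor E'HF'
          \<and> cmap_m ko km lo lm (incl_m im f) = incl_m im (cmap_m ko km lo lm f)"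
      using fun_mor[OF funcH] by (cases f) auto
  qed
  have P4: "cmap_o ko lo c \<in> S'" if c: "c \<in> S" for c
  proof -
    obtain x y g where cd: "c = (x,y,g)" by (cases c) auto
    have cO: "c \<in> Obj EGF" and nc: "\<not> (\<exists>q \<in> Obj EHF. connected EGF c (incl_o im q))" using c S_def by auto
    have A: "x \<in> Obj E" "y \<in> Obj F" using cO by (auto simp: cd EGF_def iso_Obj)
    have "cmap_o ko lo c \<in> Obj E'GF'" using fun_obj[OF func cO] .
    moreover have "\<not> connected E'GF' (cmap_o ko lo c) (incl_o im q')" if q': "q' \<in> Obj E'HF'" for q'
    proof
      assume con: "connected E'GF' (cmap_o ko lo c) (incl_o im q')"
      have "Pr H eo fo im (incl_o im q')" using q' by (cases q') (auto simp: E'HF'_def iso_Obj Pr_def)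
      then have "Pr H eo fo im (cmap_o ko lo c)"
        using conn_Pr[OF Hg Gc fi fe ff con[unfolded E'GF'_def]] by simp
      then obtain h where h: "h \<in> Mor H" "Dom H h = eo (ko x)" "Cod H h = fo (lo y)" "g = im h"
        by (auto simp: cd Pr_def)
      have "(x,y,h) \<in> Obj EHF" using h A by (simp add: EHF_def iso_Obj)
      moreover have "incl_o im (x,y,h) = c" using h cd by simp
      moreover have "connected EGF c c" by (simp add: connected_def)
      ultimately show False using nc by metis
    qed
    ultimately show ?thesis by (simp add: S'_def)
  qed
  have P5: "cmap_m ko km lo lm f \<in> Mor dE'F'" if f: "f \<in> Mor dEF" for f
  proof -
    have f1: "f \<in> Mor EGF" "Dom EGF f \<in> S" "Cod EGF f \<in> S" using f by (auto simp: dEF_eq fs_simps)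
    show ?thesis using fun_mor[OF func f1(1)] P4[OF f1(2)] P4[OF f1(3)] by (simp add: dE'F'_eq fs_simps)
  qed
  have P4': "\<forall>c \<in> Obj dEF. cmap_o ko lo c \<in> Obj dE'F'" using P4 by (simp add: dEF_eq dE'F'_eq fs_simps)
  have fd: "is_functor dEF dE'F' (cmap_o ko lo) (cmap_m ko km lo lm)"
    unfolding is_functor_def
  proof (intro conjI ballI impI)
    fix c assume "c \<in> Obj dEF" then show "cmap_o ko lo c \<in> Obj dE'F'" using P4' by blast
  next
    fix f assume f: "f \<in> Mor dEF"
    then have f1: "f \<in> Mor EGF" by (simp add: dEF_eq fs_simps)
    show "cmap_m ko km lo lm f \<in> Mor dE'F'" using P5 f .
    show "Dom dE'F' (cmap_m ko km lo lm f) = cmap_o ko lo (Dom dEF f)"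
      using fun_mor[OF func f1] by (simp add: dEF_eq dE'F'_eq fs_simps)
    show "Cod dE'F' (cmap_m ko km lo lm f) = cmap_o ko lo (Cod dEF f)"
      using fun_mor[OF func f1] by (simp add: dEF_eq dE'F'_eq fs_simps)
  next
    fix f g assume "f \<in> Mor dEF" "g \<in> Mor dEF" "Cod dEF f = Dom dEF g"
    then show "cmap_m ko km lo lm (Comp dEF g f) = Comp dE'F' (cmap_m ko km lo lm g) (cmap_m ko km lo lm f)"
      using fun_comp[OF func] by (simp add: dEF_eq dE'F'_eq fs_simps)
  next
    fix c assume "c \<in> Obj dEF"
    then show "cmap_m ko km lo lm (Idm dEF c) = Idm dE'F' (cmap_o ko lo c)"
      using fun_id[OF func] by (simp add: dEF_eq dE'F'_eq fs_simps S_def)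
  qed
  have inj: "f = g" if f: "f \<in> Mor dEF" and g: "g \<in> Mor dEF" and dd: "Dom dEF f = Dom dEF g"
    and cc: "Cod dEF f = Cod dEF g" and eq: "cmap_m ko km lo lm f = cmap_m ko km lo lm g" for f g
  proof -
    obtain s t a b where fd: "f = (s,t,a,b)" by (cases f) auto
    obtain s' t' a' b' where gd: "g = (s',t',a',b')" by (cases g) auto
    have st: "s' = s" "t' = t" using dd cc by (simp_all add: fd gd dEF_eq fs_simps EGF_def iso_simps)
    have A: "a \<in> Mor E" "a' \<in> Mor E" "Dom E a = Dom E a'" "Cod E a = Cod E a'"
      "b \<in> Mor F" "b' \<in> Mor F" "Dom F b = Dom F b'" "Cod F b = Cod F b'"
      "km a = km a'" "lm b = lm b'"
      using f g eq st by (auto simp: fd gd dEF_eq fs_simps EGF_def iso_Mor)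
    have "a = a'" using k_faithful A unfolding faithful_def by blast
    moreover have "b = b'" using l_faithful A unfolding faithful_def by blast
    ultimately show ?thesis using st fd gd by simp
  qed
  have "faithful dEF dE'F' (cmap_o ko lo) (cmap_m ko km lo lm)"
    unfolding faithful_def using fd inj by blast
  then show ?thesis using func P2 P3 P4' P5 by blast
qed

end
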